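(* Let $N$ be a simply connected $2$-step nilpotent Lie group with Lie algebra $\mathfrak n$ and a left-invariant Lorentzian metric $\langle\cdot,\cdot\rangle$ of $pH$-type whose center $\mathfrak Z$ is positive definite, of dimension $m$, and let $\mathfrak E=\mathfrak Z^{\perp}$, of dimension $n$. Then $(N,\langle\cdot,\cdot\rangle)$ is a nilsoliton if and only if $m=1$ and $n=2$ (so that $N$ is the three-dimensional Heisenberg group).
   Context: For $y\in\mathfrak n$ let $J_y$ be defined by $\langle J_y x,w\rangle=\langle y,[x,w]\rangle$ for all $x,w$. Here $\mathfrak n=\mathfrak Z\oplus\mathfrak E$ orthogonally; choose orthonormal bases $\{z_\alpha\}$ of $\mathfrak Z$, $\{e_a\}$ of $\mathfrak E$, $\varepsilon_\alpha=\langle z_\alpha,z_\alpha\rangle$, $\bar\varepsilon_a=\langle e_a,e_a\rangle$. The involution $\iota$ is given by $\iota z_\alpha=\varepsilon_\alpha z_\alpha$, $\iota e_a=\bar\varepsilon_a e_a$, and $j(y)=\iota\circ J_{\iota y}$. The metric is of $pH$-type if $j(z)^2=-\langle z,\iota z\rangle I$ (on $\mathfrak E$) for all $z$ in the center. $\mathrm{Ric}$ is the Ricci operator ($\langle\mathrm{Ric}\,x,y\rangle=\varrho(x,y)$). The metric is a nilsoliton if $\mathrm{Ric}=c\cdot\mathrm{Id}+D$ for some $c\in\mathbb R$ and some derivation $D$ of $\mathfrak n$. *)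

theory Defs
  imports "HOL-Analysis.Analysis"
begin

text \<open>A finite-dimensional real Lie algebra is modelled as a Euclidean-space type 'v
(used only as an abstract finite-dimensional real vector space) with a bracket br.
The pseudo-Riemannian metric is a separate bilinear form g.\<close>

definition lie_algebra :: "('v::euclidean_space \<Rightarrow> 'v \<Rightarrow> 'v) \<Rightarrow> bool" where
  "lie_algebra br \<longleftrightarrow> bilinear br \<and> (\<forall>x. br x x = 0) \<and>
     (\<forall>x y w. br x (br y w) + br y (br w x) + br w (br x y) = 0)"

definition two_step_nilpotent :: "('v::euclidean_space \<Rightarrow> 'v \<Rightarrow> 'v) \<Rightarrow> bool" where
  "two_step_nilpotent br \<longleftrightarrow> lie_algebra br \<and> (\<forall>x y w. br (br x y) w = 0) \<and>
     (\<exists>x y. br x y \<noteq> 0)"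

definition lie_center :: "('v::euclidean_space \<Rightarrow> 'v \<Rightarrow> 'v) \<Rightarrow> 'v set" where
  "lie_center br = {z. \<forall>x. br z x = 0}"

definition derivation :: "('v::euclidean_space \<Rightarrow> 'v \<Rightarrow> 'v) \<Rightarrow> ('v \<Rightarrow> 'v) \<Rightarrow> bool" where
  "derivation br D \<longleftrightarrow> linear D \<and> (\<forall>x y. D (br x y) = br (D x) y + br x (D y))"

text \<open>Lorentzian: symmetric, bilinear, nondegenerate, of index exactly 1
(maximal dimension of a negative definite subspace is 1).\<close>
definition lorentzian :: "('v::euclidean_space \<Rightarrow> 'v \<Rightarrow> real) \<Rightarrow> bool" where
  "lorentzian g \<longleftrightarrow> bilinear g \<and> (\<forall>x y. g x y = g y x) \<and>
     (\<forall>x. (\<forall>y. g x y = 0) \<longrightarrow> x = 0) \<and>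
     (\<exists>v. g v v < 0) \<and>
     (\<forall>S. subspace S \<and> (\<forall>v\<in>S. v \<noteq> 0 \<longrightarrow> g v v < 0) \<longrightarrow> dim S \<le> 1)"

definition orth_compl :: "('v::euclidean_space \<Rightarrow> 'v \<Rightarrow> real) \<Rightarrow> 'v set \<Rightarrow> 'v set" where
  "orth_compl g A = {x. \<forall>z\<in>A. g x z = 0}"

definition orthonormal_basis ::
  "('v::euclidean_space \<Rightarrow> 'v \<Rightarrow> real) \<Rightarrow> (nat \<Rightarrow> 'v) \<Rightarrow> nat \<Rightarrow> 'v set \<Rightarrow> bool" where
  "orthonormal_basis g b k V \<longleftrightarrow> span (b ` {..<k}) = V \<and>
     (\<forall>i<k. \<forall>j<k. i \<noteq> j \<longrightarrow> g (b i) (b j) = 0) \<and>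
     (\<forall>i<k. g (b i) (b i) = 1 \<or> g (b i) (b i) = -1)"

text \<open>The involution iota: iota z_a = eps_a z_a, iota e_a = epsbar_a e_a.
Writing x = sum eps_a g(x,z_a) z_a + sum epsbar_a g(x,e_a) e_a, this is
iota x = sum g(x,z_a) z_a + sum g(x,e_a) e_a.\<close>
definition iota ::
  "('v::euclidean_space \<Rightarrow> 'v \<Rightarrow> real) \<Rightarrow> (nat \<Rightarrow> 'v) \<Rightarrow> nat \<Rightarrow> (nat \<Rightarrow> 'v) \<Rightarrow> nat \<Rightarrow> 'v \<Rightarrow> 'v" where
  "iota g zb m eb n x = (\<Sum>a<m. g x (zb a) *\<^sub>R zb a) + (\<Sum>a<n. g x (eb a) *\<^sub>R eb a)"

definition Jmap ::
  "('v::euclidean_space \<Rightarrow> 'v \<Rightarrow> 'v) \<Rightarrow> ('v \<Rightarrow> 'v \<Rightarrow> real) \<Rightarrow> 'v \<Rightarrow> 'v \<Rightarrow> 'v" where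
  "Jmap br g y x = (THE v. \<forall>w. g v w = g y (br x w))"

definition jmap ::
  "('v::euclidean_space \<Rightarrow> 'v \<Rightarrow> 'v) \<Rightarrow> ('v \<Rightarrow> 'v \<Rightarrow> real) \<Rightarrow> (nat \<Rightarrow> 'v) \<Rightarrow> nat \<Rightarrow>
     (nat \<Rightarrow> 'v) \<Rightarrow> nat \<Rightarrow> 'v \<Rightarrow> 'v \<Rightarrow> 'v" where
  "jmap br g zb m eb n y x = iota g zb m eb n (Jmap br g (iota g zb m eb n y) x)"

definition pH_type ::
  "('v::euclidean_space \<Rightarrow> 'v \<Rightarrow> 'v) \<Rightarrow> ('v \<Rightarrow> 'v \<Rightarrow> real) \<Rightarrow> (nat \<Rightarrow> 'v) \<Rightarrow> nat \<Rightarrow>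
     (nat \<Rightarrow> 'v) \<Rightarrow> nat \<Rightarrow> bool" where
  "pH_type br g zb m eb n \<longleftrightarrow>
     (\<forall>z\<in>lie_center br. \<forall>x\<in>orth_compl g (lie_center br).
        jmap br g zb m eb n z (jmap br g zb m eb n z x) =
          - (g z (iota g zb m eb n z)) *\<^sub>R x)"

text \<open>Levi-Civita connection of the left-invariant metric (Koszul formula).\<close>
definition levi_civita ::
  "('v::euclidean_space \<Rightarrow> 'v \<Rightarrow> 'v) \<Rightarrow> ('v \<Rightarrow> 'v \<Rightarrow> real) \<Rightarrow> 'v \<Rightarrow> 'v \<Rightarrow> 'v" where
  "levi_civita br g x y =
     (THE v. \<forall>w. 2 * g v w = g (br x y) w - g (br y w) x + g (br w x) y)"

definition curvature ::
  "('v::euclidean_space \<Rightarrow> 'v \<Rightarrow> 'v) \<Rightarrow> ('v \<Rightarrow> 'v \<Rightarrow> real) \<Rightarrow> 'v \<Rightarrow> 'v \<Rightarrow> 'v \<Rightarrow> 'v" where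
  "curvature br g x y w =
     levi_civita br g x (levi_civita br g y w) - levi_civita br g y (levi_civita br g x w)
     - levi_civita br g (br x y) w"

text \<open>Ricci tensor rho(x,y) = trace (w \<mapsto> R(w,x) y); trace computed in any basis.\<close>
definition ricci_tensor ::
  "('v::euclidean_space \<Rightarrow> 'v \<Rightarrow> 'v) \<Rightarrow> ('v \<Rightarrow> 'v \<Rightarrow> real) \<Rightarrow> 'v \<Rightarrow> 'v \<Rightarrow> real" where
  "ricci_tensor br g x y = (\<Sum>b\<in>Basis. curvature br g b x y \<bullet> b)"

definition ricci_op ::
  "('v::euclidean_space \<Rightarrow> 'v \<Rightarrow> 'v) \<Rightarrow> ('v \<Rightarrow> 'v \<Rightarrow> real) \<Rightarrow> 'v \<Rightarrow> 'v" where
  "ricci_op br g x = (THE v. \<forall>y. g v y = ricci_tensor br g x y)"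

definition nilsoliton ::
  "('v::euclidean_space \<Rightarrow> 'v \<Rightarrow> 'v) \<Rightarrow> ('v \<Rightarrow> 'v \<Rightarrow> real) \<Rightarrow> bool" where
  "nilsoliton br g \<longleftrightarrow>
     (\<exists>c D. derivation br D \<and> (\<forall>x. ricci_op br g x = c *\<^sub>R x + D x))"

end

theory Submission
  imports Defs
begin


lemma swap3: "(\<Sum>x\<in>A. \<Sum>y\<in>B. \<Sum>z\<in>C. f x y z) = (\<Sum>y\<in>B. \<Sum>z\<in>C. \<Sum>x\<in>A. f x y z)"
proof -
  have "(\<Sum>x\<in>A. \<Sum>y\<in>B. \<Sum>z\<in>C. f x y z) = (\<Sum>y\<in>B. \<Sum>x\<in>A. \<Sum>z\<in>C. f x y z)" by (rule sum.swap)
  also have "\<dots> = (\<Sum>y\<in>B. \<Sum>z\<in>C. \<Sum>x\<in>A. f x y z)" by (rule sum.cong[OF refl]) (rule sum.swap)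
  finally show ?thesis .
qed


locale pHs =
  fixes br :: "'v::euclidean_space \<Rightarrow> 'v \<Rightarrow> 'v"
    and g :: "'v \<Rightarrow> 'v \<Rightarrow> real"
    and zb eb :: "nat \<Rightarrow> 'v" and m n :: nat
  assumes nil: "two_step_nilpotent br"
    and lor: "lorentzian g"
    and posZ: "\<forall>z\<in>lie_center br. z \<noteq> 0 \<longrightarrow> g z z > 0"
    and onZ: "orthonormal_basis g zb m (lie_center br)"
    and onE: "orthonormal_basis g eb n (orth_compl g (lie_center br))"
    and pH: "pH_type br g zb m eb n"
begin

abbreviation "Z \<equiv> lie_center br"
abbreviation "E \<equiv> orth_compl g (lie_center br)"

lemma bil_br: "bilinear br" using nil by (simp add: two_step_nilpotent_def lie_algebra_def)
lemma bil_g: "bilinear g" using lor by (simp add: lorentzian_def)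
lemma g_sym: "g x y = g y x" using lor by (simp add: lorentzian_def)
lemma nondeg: "(\<And>y. g x y = 0) \<Longrightarrow> x = 0" using lor by (simp add: lorentzian_def)
lemma br_self[simp]: "br x x = 0" using nil by (simp add: two_step_nilpotent_def lie_algebra_def)
lemma br_br[simp]: "br (br x y) w = 0" using nil by (simp add: two_step_nilpotent_def)

lemma lin_gl: "linear (\<lambda>x. g x y)" using bil_g by (simp add: bilinear_def)
lemma lin_gr: "linear (\<lambda>y. g x y)" using bil_g by (simp add: bilinear_def)
lemma lin_brl: "linear (\<lambda>x. br x y)" using bil_br by (simp add: bilinear_def)
lemma lin_brr: "linear (\<lambda>y. br x y)" using bil_br by (simp add: bilinear_def)

lemma g_simps[simp]:
  "g (x + y) w = g x w + g y w" "g w (x + y) = g w x + g w y"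
  "g (x - y) w = g x w - g y w" "g w (x - y) = g w x - g w y"
  "g (c *\<^sub>R x) w = c * g x w" "g w (c *\<^sub>R x) = c * g w x"
  "g (- x) w = - g x w" "g w (- x) = - g w x"
  "g 0 w = 0" "g w 0 = 0"
  "g (sum f A) w = (\<Sum>i\<in>A. g (f i) w)" "g w (sum f A) = (\<Sum>i\<in>A. g w (f i))"
  by (simp_all add: bilinear_ladd[OF bil_g] bilinear_radd[OF bil_g] bilinear_lsub[OF bil_g]
    bilinear_rsub[OF bil_g] bilinear_lmul[OF bil_g] bilinear_rmul[OF bil_g] bilinear_lneg[OF bil_g]
    bilinear_rneg[OF bil_g] bilinear_lzero[OF bil_g] bilinear_rzero[OF bil_g]
    linear_sum[OF lin_gl] linear_sum[OF lin_gr])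

lemma br_simps[simp]:
  "br (x + y) w = br x w + br y w" "br w (x + y) = br w x + br w y"
  "br (x - y) w = br x w - br y w" "br w (x - y) = br w x - br w y"
  "br (c *\<^sub>R x) w = c *\<^sub>R br x w" "br w (c *\<^sub>R x) = c *\<^sub>R br w x"
  "br (- x) w = - br x w" "br w (- x) = - br w x"
  "br 0 w = 0" "br w 0 = 0"
  "br (sum f A) w = (\<Sum>i\<in>A. br (f i) w)" "br w (sum f A) = (\<Sum>i\<in>A. br w (f i))"
  by (simp_all add: bilinear_ladd[OF bil_br] bilinear_radd[OF bil_br] bilinear_lsub[OF bil_br]
    bilinear_rsub[OF bil_br] bilinear_lmul[OF bil_br] bilinear_rmul[OF bil_br] bilinear_lneg[OF bil_br]
    bilinear_rneg[OF bil_br] bilinear_lzero[OF bil_br] bilinear_rzero[OF bil_br]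
    linear_sum[OF lin_brl] linear_sum[OF lin_brr])

lemma br_anti: "br x y = - br y x"
proof -
  have "0 = br (x+y) (x+y)" by (rule br_self[symmetric])
  also have "\<dots> = br x x + br x y + (br y x + br y y)"
    by (simp only: bilinear_ladd[OF bil_br] bilinear_radd[OF bil_br] add_ac)
  finally show ?thesis by (simp add: eq_neg_iff_add_eq_0)
qed

lemma nondeg2: "(\<And>w. g x w = g y w) \<Longrightarrow> x = y"
proof -
  assume "\<And>w. g x w = g y w"
  then have "\<And>w. g (x - y) w = 0" by simp
  then have "x - y = 0" by (rule nondeg)
  then show "x = y" by simp
qed

lemma spanZ: "span (zb ` {..<m}) = Z" using onZ by (simp add: orthonormal_basis_def)
lemma spanE: "span (eb ` {..<n}) = E" using onE by (simp add: orthonormal_basis_def)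

lemma subspZ: "subspace Z" using spanZ subspace_span by metis
lemma subspE: "subspace E" using spanE subspace_span by metis

lemma zb_in: "\<alpha> < m \<Longrightarrow> zb \<alpha> \<in> Z"
  using spanZ span_base by (metis image_eqI lessThan_iff)
lemma eb_in: "a < n \<Longrightarrow> eb a \<in> E"
  using spanE span_base by (metis image_eqI lessThan_iff)

lemma Z_brl: "z \<in> Z \<Longrightarrow> br z x = 0" by (simp add: lie_center_def)
lemma Z_brr: "z \<in> Z \<Longrightarrow> br x z = 0" using Z_brl br_anti by (metis neg_equal_0_iff_equal)
lemma br_inZ: "br x y \<in> Z" by (simp add: lie_center_def)
lemma EZ: "x \<in> E \<Longrightarrow> z \<in> Z \<Longrightarrow> g x z = 0" by (simp add: orth_compl_def)
lemma ZE: "x \<in> E \<Longrightarrow> z \<in> Z \<Longrightarrow> g z x = 0" using EZ g_sym by metis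

lemma g_zero_self: "g 0 0 = 0" by simp

lemma zz1: "\<alpha> < m \<Longrightarrow> g (zb \<alpha>) (zb \<alpha>) = 1"
proof -
  assume a: "\<alpha> < m"
  have "g (zb \<alpha>) (zb \<alpha>) = 1 \<or> g (zb \<alpha>) (zb \<alpha>) = -1" using onZ a by (simp add: orthonormal_basis_def)
  moreover have "zb \<alpha> \<noteq> 0" using calculation by auto
  then have "g (zb \<alpha>) (zb \<alpha>) > 0" using posZ zb_in a by auto
  ultimately show ?thesis by auto
qed

lemma zz: "\<alpha> < m \<Longrightarrow> \<beta> < m \<Longrightarrow> g (zb \<alpha>) (zb \<beta>) = (if \<alpha> = \<beta> then 1 else 0)"
  using onZ zz1 by (auto simp: orthonormal_basis_def)

definition s :: "nat \<Rightarrow> real" where "s a = g (eb a) (eb a)"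

lemma s_pm: "a < n \<Longrightarrow> s a = 1 \<or> s a = -1" using onE by (simp add: orthonormal_basis_def s_def)
lemma ss: "a < n \<Longrightarrow> s a * s a = 1" using s_pm[of a] by auto
lemma ee: "a < n \<Longrightarrow> b < n \<Longrightarrow> g (eb a) (eb b) = (if a = b then s a else 0)"
  using onE by (auto simp: orthonormal_basis_def s_def)

lemma ez[simp]: "a < n \<Longrightarrow> \<alpha> < m \<Longrightarrow> g (eb a) (zb \<alpha>) = 0"
  using EZ eb_in zb_in by blast
lemma ze[simp]: "a < n \<Longrightarrow> \<alpha> < m \<Longrightarrow> g (zb \<alpha>) (eb a) = 0"
  using ZE eb_in zb_in by blast

lemma sumZ: "\<beta> < m \<Longrightarrow> (\<Sum>\<alpha><m. f \<alpha> * g (zb \<alpha>) (zb \<beta>)) = f \<beta>"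
proof -
  assume b: "\<beta> < m"
  have "(\<Sum>\<alpha><m. f \<alpha> * g (zb \<alpha>) (zb \<beta>)) = (\<Sum>\<alpha><m. if \<alpha> = \<beta> then f \<alpha> else 0)"
    by (rule sum.cong) (auto simp: zz b)
  then show ?thesis using b by simp
qed

lemma sumE: "b < n \<Longrightarrow> (\<Sum>a<n. f a * g (eb a) (eb b)) = f b * s b"
proof -
  assume b: "b < n"
  have "(\<Sum>a<n. f a * g (eb a) (eb b)) = (\<Sum>a<n. if a = b then f a * s b else 0)"
    by (rule sum.cong) (auto simp: ee b)
  then show ?thesis using b by simp
qed

definition pZ :: "'v \<Rightarrow> 'v" where "pZ v = (\<Sum>\<alpha><m. g v (zb \<alpha>) *\<^sub>R zb \<alpha>)"
definition pE :: "'v \<Rightarrow> 'v" where "pE v = (\<Sum>a<n. (s a * g v (eb a)) *\<^sub>R eb a)"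

lemma pZ_in: "pZ v \<in> Z"
  unfolding pZ_def by (rule subspace_sum[OF subspZ]) (auto intro: subspace_scale[OF subspZ] zb_in)
lemma pE_in: "pE v \<in> E"
  unfolding pE_def by (rule subspace_sum[OF subspE]) (auto intro: subspace_scale[OF subspE] eb_in)

lemma g_pZ_zb: "\<beta> < m \<Longrightarrow> g (pZ v) (zb \<beta>) = g v (zb \<beta>)"
  unfolding pZ_def using sumZ by simp

lemma g_pE_eb: "b < n \<Longrightarrow> g (pE v) (eb b) = g v (eb b)"
  unfolding pE_def using sumE[of b "\<lambda>a. s a * g v (eb a)"] ss by (simp add: mult.commute mult.left_commute)

lemma span_orth: "x \<in> span S \<Longrightarrow> (\<And>y. y \<in> S \<Longrightarrow> g w y = 0) \<Longrightarrow> g w x = 0"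
proof (induction rule: span_induct_alt)
  case base then show ?case by simp
next
  case (step c x y) then show ?case by simp
qed

lemma minus_pZ_E: "v - pZ v \<in> E"
proof -
  have "g (v - pZ v) z = 0" if "z \<in> Z" for z
  proof -
    have "z \<in> span (zb ` {..<m})" using that spanZ by simp
    then show ?thesis
      by (rule span_orth) (auto simp: g_pZ_zb)
  qed
  then show ?thesis by (simp add: orth_compl_def)
qed

lemma orth_E: "w \<in> E \<Longrightarrow> (\<And>b. b < n \<Longrightarrow> g w (eb b) = 0) \<Longrightarrow> w = 0"
proof -
  assume wE: "w \<in> E" and h: "\<And>b. b < n \<Longrightarrow> g w (eb b) = 0"
  have hE: "g w y = 0" if "y \<in> E" for y
  proof -
    have "y \<in> span (eb ` {..<n})" using that spanE by simp
    then show ?thesis by (rule span_orth) (auto simp: h)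
  qed
  show "w = 0"
  proof (rule nondeg)
    fix x
    have "g w x = g w (x - pZ x) + g w (pZ x)" by simp
    also have "\<dots> = 0" using hE[OF minus_pZ_E] EZ[OF wE pZ_in] by simp
    finally show "g w x = 0" .
  qed
qed

lemma expand: "v = pZ v + pE v"
proof -
  have "v - pZ v - pE v = 0"
  proof (rule orth_E)
    show "v - pZ v - pE v \<in> E" using minus_pZ_E pE_in subspace_diff[OF subspE] by blast
    fix b assume b: "b < n"
    have "g (pZ v) (eb b) = 0" using ZE[OF eb_in[OF b] pZ_in] .
    then show "g (v - pZ v - pE v) (eb b) = 0" using g_pE_eb[OF b] by simp
  qed
  then show ?thesis by (simp add: algebra_simps)
qed

lemma pE_Z: "z \<in> Z \<Longrightarrow> pE z = 0"
  unfolding pE_def using ZE eb_in by simp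
lemma pZ_E: "x \<in> E \<Longrightarrow> pZ x = 0"
  unfolding pZ_def using EZ zb_in by simp

lemma expandZ: "z \<in> Z \<Longrightarrow> z = pZ z" using expand pE_Z by (metis add.right_neutral)
lemma expandE: "x \<in> E \<Longrightarrow> x = pE x" using expand pZ_E by (metis add.left_neutral)

lemma g_expand: "g v w = (\<Sum>\<alpha><m. g v (zb \<alpha>) * g (zb \<alpha>) w) + (\<Sum>a<n. s a * g v (eb a) * g (eb a) w)"
proof -
  have "g v w = g (pZ v + pE v) w" using expand by simp
  then show ?thesis by (simp add: pZ_def pE_def)
qed

lemma lin_expand: "linear f \<Longrightarrow> f v = (\<Sum>\<alpha><m. g v (zb \<alpha>) *\<^sub>R f (zb \<alpha>)) + (\<Sum>a<n. (s a * g v (eb a)) *\<^sub>R f (eb a))"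
proof -
  assume l: "linear f"
  have "f v = f (pZ v) + f (pE v)" using expand linear_add[OF l] by metis
  then show ?thesis by (simp add: pZ_def pE_def linear_sum[OF l] linear_scale[OF l])
qed

lemma lin_ext0: "linear f \<Longrightarrow> (\<And>\<alpha>. \<alpha> < m \<Longrightarrow> f (zb \<alpha>) = 0) \<Longrightarrow> (\<And>a. a < n \<Longrightarrow> f (eb a) = 0) \<Longrightarrow> f v = 0"
  by (subst lin_expand[of f v]) (auto intro!: sum.neutral)

definition rep :: "('v \<Rightarrow> real) \<Rightarrow> 'v" where
  "rep \<phi> = (\<Sum>\<alpha><m. \<phi> (zb \<alpha>) *\<^sub>R zb \<alpha>) + (\<Sum>a<n. (s a * \<phi> (eb a)) *\<^sub>R eb a)"

lemma rep_g: "linear \<phi> \<Longrightarrow> g (rep \<phi>) w = \<phi> w"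
proof -
  assume l: "linear \<phi>"
  have "\<phi> w = (\<Sum>\<alpha><m. g w (zb \<alpha>) * \<phi> (zb \<alpha>)) + (\<Sum>a<n. (s a * g w (eb a)) * \<phi> (eb a))"
    using lin_expand[OF l, of w] by simp
  then show ?thesis by (simp add: rep_def g_sym[of w] mult_ac)
qed

lemma the_rep: "linear \<phi> \<Longrightarrow> (THE v. \<forall>w. g v w = \<phi> w) = rep \<phi>"
  apply (rule the_equality)
  using rep_g apply blast
  using rep_g nondeg2 by metis

abbreviation J where "J \<equiv> Jmap br g"

lemma lin_gbr: "linear (\<lambda>w. g y (br x w))"
  by (rule linearI) simp_all

lemma J_g: "g (J y x) w = g y (br x w)"
proof -
  have "J y x = rep (\<lambda>w. g y (br x w))"
    unfolding Jmap_def by (rule the_rep[OF lin_gbr])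
  then show ?thesis using rep_g[OF lin_gbr] by simp
qed

lemma J_inE: "J y x \<in> E"
  by (simp add: orth_compl_def J_g Z_brr)

lemma J_Z: "z \<in> Z \<Longrightarrow> J y z = 0"
  by (rule nondeg) (simp add: J_g Z_brl)

lemma J_linx: "linear (\<lambda>x. J y x)"
  by (rule linearI; rule nondeg2; simp add: J_g)
lemma J_liny: "linear (\<lambda>y. J y x)"
  by (rule linearI; rule nondeg2; simp add: J_g)

lemma J_simps[simp]:
  "J (y1 + y2) x = J y1 x + J y2 x" "J (c *\<^sub>R y) x = c *\<^sub>R J y x"
  "J y (x1 + x2) = J y x1 + J y x2" "J y (c *\<^sub>R x) = c *\<^sub>R J y x"
  "J y (- x) = - J y x" "J (- y) x = - J y x" "J 0 x = 0" "J y 0 = 0"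
  "J y (x1 - x2) = J y x1 - J y x2" "J (y1 - y2) x = J y1 x - J y2 x"
  using linear_add[OF J_liny] linear_scale[OF J_liny] linear_add[OF J_linx] linear_scale[OF J_linx]
    linear_neg[OF J_liny] linear_neg[OF J_linx] linear_0[OF J_liny] linear_0[OF J_linx]
    linear_diff[OF J_liny] linear_diff[OF J_linx] by auto

abbreviation lc where "lc \<equiv> levi_civita br g"

definition kos :: "'v \<Rightarrow> 'v \<Rightarrow> 'v \<Rightarrow> real" where
  "kos x y w = g (br x y) w - g (br y w) x + g (br w x) y"

lemma kos_lin[simp]:
  "kos (x1 + x2) y w = kos x1 y w + kos x2 y w"
  "kos (c *\<^sub>R x) y w = c * kos x y w"
  "kos x (y1 + y2) w = kos x y1 w + kos x y2 w"
  "kos x (c *\<^sub>R y) w = c * kos x y w"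
  "kos x y (w1 + w2) = kos x y w1 + kos x y w2"
  "kos x y (c *\<^sub>R w) = c * kos x y w"
  by (simp_all add: kos_def algebra_simps)

lemma lin_kos: "linear (\<lambda>w. kos x y w / 2)"
  by (rule linearI) (simp_all add: add_divide_distrib)

lemma lc_char: "2 * g (lc x y) w = kos x y w"
proof -
  let ?\<phi> = "\<lambda>w. kos x y w / 2"
  have rg: "g (rep ?\<phi>) w = kos x y w / 2" for w using rep_g[OF lin_kos] by simp
  have "lc x y = rep ?\<phi>"
    unfolding levi_civita_def kos_def[symmetric]
  proof (rule the_equality)
    show "\<forall>w. 2 * g (rep ?\<phi>) w = kos x y w" by (simp add: rg)
    fix v assume "\<forall>w. 2 * g v w = kos x y w"
    then have "g v w = g (rep ?\<phi>) w" for w using rg[of w] by (metis nonzero_mult_div_cancel_left zero_neq_numeral)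
    then show "v = rep ?\<phi>" by (rule nondeg2)
  qed
  then show ?thesis by (simp add: rg)
qed

lemma lc_char': "g (lc x y) w = kos x y w / 2"
  using lc_char[of x y w] by simp

lemma lc_unique: "(\<And>w. 2 * g v w = kos x y w) \<Longrightarrow> lc x y = v"
proof -
  assume h: "\<And>w. 2 * g v w = kos x y w"
  show ?thesis
  proof (rule nondeg2)
    fix w show "g (lc x y) w = g v w" using h[of w] lc_char'[of x y w] by simp
  qed
qed

lemma lc_linl: "linear (\<lambda>x. lc x y)"
  by (rule linearI; rule lc_unique; simp add: lc_char')
lemma lc_linr: "linear (\<lambda>y. lc x y)"
  by (rule linearI; rule lc_unique; simp add: lc_char')

lemma lc_simps[simp]:
  "lc (x1 + x2) y = lc x1 y + lc x2 y" "lc (c *\<^sub>R x) y = c *\<^sub>R lc x y"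
  "lc x (y1 + y2) = lc x y1 + lc x y2" "lc x (c *\<^sub>R y) = c *\<^sub>R lc x y"
  "lc 0 y = 0" "lc x 0 = 0"
  "lc (x1 - x2) y = lc x1 y - lc x2 y" "lc x (y1 - y2) = lc x y1 - lc x y2"
  "lc (- x) y = - lc x y" "lc x (- y) = - lc x y"
  using linear_add[OF lc_linl] linear_scale[OF lc_linl] linear_add[OF lc_linr] linear_scale[OF lc_linr]
    linear_0[OF lc_linl] linear_0[OF lc_linr] linear_diff[OF lc_linl] linear_diff[OF lc_linr]
    linear_neg[OF lc_linl] linear_neg[OF lc_linr] by auto

lemma lc_EE: "x \<in> E \<Longrightarrow> y \<in> E \<Longrightarrow> lc x y = (1/2) *\<^sub>R br x y"
proof -
  assume xE: "x \<in> E" and yE: "y \<in> E"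
  show ?thesis
  proof (rule lc_unique)
    fix w
    have "g (br y w) x = 0" "g (br w x) y = 0" using ZE[OF xE br_inZ] ZE[OF yE br_inZ] by auto
    then show "2 * g ((1/2) *\<^sub>R br x y) w = kos x y w" by (simp add: kos_def)
  qed
qed

lemma gbr_swap: "g (br w x) z = - g z (br x w)"
  using g_sym br_anti by (metis g_simps(8))

lemma lc_xZ: "z \<in> Z \<Longrightarrow> lc x z = -(1/2) *\<^sub>R J z x"
proof -
  assume zZ: "z \<in> Z"
  show ?thesis
  proof (rule lc_unique)
    fix w
    have "g (br x z) w = 0" "g (br z w) x = 0" using Z_brl[OF zZ] Z_brr[OF zZ] by auto
    then show "2 * g (-(1/2) *\<^sub>R J z x) w = kos x z w" by (simp add: kos_def J_g gbr_swap)
  qed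
qed

lemma lc_Zx: "z \<in> Z \<Longrightarrow> lc z x = -(1/2) *\<^sub>R J z x"
proof -
  assume zZ: "z \<in> Z"
  show ?thesis
  proof (rule lc_unique)
    fix w
    have "g (br z x) w = 0" "g (br w z) x = 0" using Z_brl[OF zZ] Z_brr[OF zZ] by auto
    then show "2 * g (-(1/2) *\<^sub>R J z x) w = kos z x w" by (simp add: kos_def J_g g_sym[of _ z])
  qed
qed

lemma lcZ1: "z \<in> Z \<Longrightarrow> lc x z \<in> E"
  using lc_xZ J_inE subspace_scale[OF subspE] subspace_neg[OF subspE] by simp
lemma lcZ2: "z \<in> Z \<Longrightarrow> lc z x \<in> E"
  using lc_Zx J_inE subspace_scale[OF subspE] subspace_neg[OF subspE] by simp
lemma lcEE: "x \<in> E \<Longrightarrow> y \<in> E \<Longrightarrow> lc x y \<in> Z"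
  using lc_EE br_inZ subspace_scale[OF subspZ] by simp
lemma lcZZ: "z \<in> Z \<Longrightarrow> z' \<in> Z \<Longrightarrow> lc z z' = 0"
  using lc_Zx J_Z by simp

abbreviation R where "R \<equiv> curvature br g"

lemma R_lin1: "linear (\<lambda>u. R u x y)"
  by (rule linearI) (simp_all add: curvature_def algebra_simps)
lemma R_lin2: "linear (\<lambda>x. R u x y)"
  by (rule linearI) (simp_all add: curvature_def algebra_simps)
lemma R_lin3: "linear (\<lambda>y. R u x y)"
  by (rule linearI) (simp_all add: curvature_def algebra_simps)

lemma R_simps[simp]:
  "R u x (y1 + y2) = R u x y1 + R u x y2" "R u x (c *\<^sub>R y) = c *\<^sub>R R u x y"
  "R u (x1 + x2) y = R u x1 y + R u x2 y" "R u (c *\<^sub>R x) y = c *\<^sub>R R u x y"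
  using linear_add[OF R_lin3] linear_scale[OF R_lin3] linear_add[OF R_lin2] linear_scale[OF R_lin2]
  by auto

lemma sc_Z: "x \<in> Z \<Longrightarrow> c *\<^sub>R x \<in> Z" using subspace_scale[OF subspZ] by blast
lemma sc_E: "x \<in> E \<Longrightarrow> c *\<^sub>R x \<in> E" using subspace_scale[OF subspE] by blast

lemma R_ZEE: "z \<in> Z \<Longrightarrow> x \<in> E \<Longrightarrow> y \<in> E \<Longrightarrow> R z x y = (1/4) *\<^sub>R br x (J z y)"
proof -
  assume zZ: "z \<in> Z" and xE: "x \<in> E" and yE: "y \<in> E"
  have 1: "lc z (lc x y) = 0" using lcZZ[OF zZ lcEE[OF xE yE]] .
  have 2: "lc x (lc z y) = -(1/4) *\<^sub>R br x (J z y)"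
    using lc_Zx[OF zZ, of y] lc_EE[OF xE sc_E[OF J_inE]] by simp
  have 3: "br z x = 0" using Z_brl[OF zZ] .
  show ?thesis unfolding curvature_def using 1 2 3 by simp
qed

lemma R_EEE: "e \<in> E \<Longrightarrow> x \<in> E \<Longrightarrow> y \<in> E \<Longrightarrow>
  R e x y = -(1/4) *\<^sub>R J (br x y) e + (1/4) *\<^sub>R J (br e y) x + (1/2) *\<^sub>R J (br e x) y"
proof -
  assume eE: "e \<in> E" and xE: "x \<in> E" and yE: "y \<in> E"
  have a: "lc e ((1/2) *\<^sub>R br x y) = -(1/2) *\<^sub>R J ((1/2) *\<^sub>R br x y) e"
    by (rule lc_xZ[OF sc_Z[OF br_inZ]])
  have b: "lc x ((1/2) *\<^sub>R br e y) = -(1/2) *\<^sub>R J ((1/2) *\<^sub>R br e y) x"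
    by (rule lc_xZ[OF sc_Z[OF br_inZ]])
  have 1: "lc e (lc x y) = -(1/4) *\<^sub>R J (br x y) e"
    using lc_EE[OF xE yE] a by simp
  have 2: "lc x (lc e y) = -(1/4) *\<^sub>R J (br e y) x"
    using lc_EE[OF eE yE] b by simp
  have 3: "lc (br e x) y = -(1/2) *\<^sub>R J (br e x) y" using lc_Zx[OF br_inZ] .
  show ?thesis unfolding curvature_def using 1 2 3 by simp
qed

lemma R_EZZ: "e \<in> E \<Longrightarrow> z \<in> Z \<Longrightarrow> z' \<in> Z \<Longrightarrow> R e z z' = -(1/4) *\<^sub>R J z (J z' e)"
proof -
  assume eE: "e \<in> E" and zZ: "z \<in> Z" and zZ': "z' \<in> Z"
  have 1: "lc e (lc z z') = 0" using lcZZ[OF zZ zZ'] by simp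
  have 2: "lc z (lc e z') = (1/4) *\<^sub>R J z (J z' e)"
    using lc_xZ[OF zZ', of e] lc_Zx[OF zZ] by simp
  have 3: "br e z = 0" using Z_brr[OF zZ] .
  show ?thesis unfolding curvature_def using 1 2 3 by simp
qed

lemma R_ZZZ: "z \<in> Z \<Longrightarrow> z1 \<in> Z \<Longrightarrow> z2 \<in> Z \<Longrightarrow> R z z1 z2 = 0"
  unfolding curvature_def using lcZZ Z_brl by simp

lemma R_ZEZ: "z' \<in> Z \<Longrightarrow> x \<in> E \<Longrightarrow> z \<in> Z \<Longrightarrow> R z' x z \<in> E"
  unfolding curvature_def using lcZZ Z_brl lcZ2 by simp
lemma R_EEZ: "e \<in> E \<Longrightarrow> x \<in> E \<Longrightarrow> z \<in> Z \<Longrightarrow> R e x z \<in> Z"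
  unfolding curvature_def using lcZZ[OF br_inZ] lcEE[OF _ lcZ1] subspace_diff[OF subspZ] by simp
lemma R_ZZE: "z' \<in> Z \<Longrightarrow> z \<in> Z \<Longrightarrow> x \<in> E \<Longrightarrow> R z' z x \<in> E"
  unfolding curvature_def using Z_brl lcZ2 subspace_diff[OF subspE] by simp
lemma R_EZE: "e \<in> E \<Longrightarrow> z \<in> Z \<Longrightarrow> x \<in> E \<Longrightarrow> R e z x \<in> Z"
  unfolding curvature_def using Z_brr lcEE lcZZ lcZ2 by simp

lemma g_basis: "(\<Sum>b\<in>Basis. g b w * (v \<bullet> b)) = g v w"
proof -
  have "g v w = g (\<Sum>b\<in>Basis. (v \<bullet> b) *\<^sub>R b) w" by (simp add: euclidean_representation)
  then show ?thesis by (simp add: mult.commute)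
qed

lemma trace: "linear L \<Longrightarrow> (\<Sum>b\<in>Basis. L b \<bullet> b) =
   (\<Sum>\<alpha><m. g (L (zb \<alpha>)) (zb \<alpha>)) + (\<Sum>a<n. s a * g (L (eb a)) (eb a))"
proof -
  assume l: "linear L"
  have "(\<Sum>b\<in>Basis. L b \<bullet> b) = (\<Sum>b\<in>Basis. (\<Sum>\<alpha><m. g b (zb \<alpha>) * (L (zb \<alpha>) \<bullet> b)) +
          (\<Sum>a<n. s a * (g b (eb a) * (L (eb a) \<bullet> b))))"
    by (rule sum.cong[OF refl], subst lin_expand[OF l], simp add: inner_sum_left inner_add_left mult.assoc)
  also have "\<dots> = (\<Sum>\<alpha><m. \<Sum>b\<in>Basis. g b (zb \<alpha>) * (L (zb \<alpha>) \<bullet> b)) +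
          (\<Sum>a<n. s a * (\<Sum>b\<in>Basis. g b (eb a) * (L (eb a) \<bullet> b)))"
    by (simp add: sum.distrib sum_distrib_left sum.swap[of _ Basis])
  also have "\<dots> = (\<Sum>\<alpha><m. g (L (zb \<alpha>)) (zb \<alpha>)) + (\<Sum>a<n. s a * g (L (eb a)) (eb a))"
    by (simp add: g_basis)
  finally show ?thesis .
qed

abbreviation rho where "rho \<equiv> ricci_tensor br g"

lemma rho_trace: "rho x y = (\<Sum>\<alpha><m. g (R (zb \<alpha>) x y) (zb \<alpha>)) + (\<Sum>a<n. s a * g (R (eb a) x y) (eb a))"
  unfolding ricci_tensor_def by (rule trace[OF R_lin1])

lemma rho_lin2: "linear (rho x)"
  by (rule linearI) (simp_all add: ricci_tensor_def inner_add_left sum.distrib sum_distrib_left)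
lemma rho_lin1: "linear (\<lambda>x. rho x y)"
  by (rule linearI) (simp_all add: ricci_tensor_def inner_add_left sum.distrib sum_distrib_left)

lemma gbrbr: "g (br e x) (br e y) = (\<Sum>\<gamma><m. g (J (zb \<gamma>) x) e * g (J (zb \<gamma>) y) e)"
proof -
  have "g (br e x) (br e y) = (\<Sum>\<alpha><m. g (br e x) (zb \<alpha>) * g (zb \<alpha>) (br e y))"
    using g_expand[of "br e x" "br e y"] EZ[OF eb_in br_inZ] by (simp add: g_sym[of "eb _"])
  also have "\<dots> = (\<Sum>\<gamma><m. g (J (zb \<gamma>) x) e * g (J (zb \<gamma>) y) e)"
    by (rule sum.cong[OF refl]) (simp add: J_g g_sym[of "br _ _"] br_anti[of e])
  finally show ?thesis .
qed

lemma gEE: "x \<in> E \<Longrightarrow> y \<in> E \<Longrightarrow> g x y = (\<Sum>a<n. s a * g x (eb a) * g y (eb a))"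
  using g_expand[of x y] ZE zb_in by (simp add: g_sym[of "eb _" y])

lemma rho_EE: "x \<in> E \<Longrightarrow> y \<in> E \<Longrightarrow> rho x y = -(1/2) * (\<Sum>\<gamma><m. g (J (zb \<gamma>) x) (J (zb \<gamma>) y))"
proof -
  assume xE: "x \<in> E" and yE: "y \<in> E"
  have Zp: "g (R (zb \<gamma>) x y) (zb \<gamma>) = (1/4) * g (J (zb \<gamma>) x) (J (zb \<gamma>) y)" if "\<gamma> < m" for \<gamma>
    using R_ZEE[OF zb_in[OF that] xE yE] by (simp add: J_g g_sym[of "br _ _"])
  have Ep: "g (R (eb a) x y) (eb a) = -(3/4) * g (br (eb a) x) (br (eb a) y)" if "a < n" for a
  proof -
    have "g (R (eb a) x y) (eb a) = -(1/4) * g (br (eb a) y) (br (eb a) x) - (1/2) * g (br (eb a) x) (br (eb a) y)"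
      using R_EEE[OF eb_in[OF that] xE yE] by (simp add: J_g br_anti[of _ "eb a"])
    then show ?thesis by (simp add: g_sym[of "br (eb a) y"])
  qed
  have "rho x y = (1/4) * (\<Sum>\<gamma><m. g (J (zb \<gamma>) x) (J (zb \<gamma>) y)) -
     (3/4) * (\<Sum>a<n. s a * g (br (eb a) x) (br (eb a) y))"
    by (simp add: rho_trace Zp Ep sum_distrib_left sum_negf mult_ac)
  also have "(\<Sum>a<n. s a * g (br (eb a) x) (br (eb a) y)) = (\<Sum>\<gamma><m. g (J (zb \<gamma>) x) (J (zb \<gamma>) y))"
    by (simp add: gbrbr gEE[OF J_inE J_inE] sum_distrib_left sum.swap[of _ "{..<n}"] mult_ac)
  finally show ?thesis by simp
qed

lemma rho_ZZ: "z \<in> Z \<Longrightarrow> z' \<in> Z \<Longrightarrow> rho z z' = (1/4) * (\<Sum>a<n. s a * g (J z (eb a)) (J z' (eb a)))"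
proof -
  assume zZ: "z \<in> Z" and zZ': "z' \<in> Z"
  have Ep: "g (R (eb a) z z') (eb a) = (1/4) * g (J z (eb a)) (J z' (eb a))" if "a < n" for a
    using R_EZZ[OF eb_in[OF that] zZ zZ'] by (simp add: J_g br_anti[of "J _ _"])
  show ?thesis
    by (simp add: rho_trace Ep R_ZZZ[OF zb_in zZ zZ'] sum_distrib_left mult_ac)
qed

lemma rho_EZ: "x \<in> E \<Longrightarrow> z \<in> Z \<Longrightarrow> rho x z = 0"
  by (simp add: rho_trace EZ[OF R_ZEZ[OF zb_in]] ZE[OF eb_in R_EEZ[OF eb_in]] zb_in)
lemma rho_ZE: "z \<in> Z \<Longrightarrow> x \<in> E \<Longrightarrow> rho z x = 0"
  by (simp add: rho_trace EZ[OF R_ZZE[OF zb_in]] ZE[OF eb_in R_EZE[OF eb_in]] zb_in)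

abbreviation Ric where "Ric \<equiv> ricci_op br g"

lemma Ric_expand: "Ric x = (\<Sum>\<alpha><m. rho x (zb \<alpha>) *\<^sub>R zb \<alpha>) + (\<Sum>a<n. (s a * rho x (eb a)) *\<^sub>R eb a)"
  unfolding ricci_op_def the_rep[OF rho_lin2] rep_def ..

lemma Ric_g: "g (Ric x) y = rho x y"
  unfolding ricci_op_def the_rep[OF rho_lin2] by (rule rep_g[OF rho_lin2])

lemma Ric_lin: "linear Ric"
  by (rule linearI; rule nondeg2; simp add: Ric_g linear_add[OF rho_lin1] linear_scale[OF rho_lin1])

definition C :: "nat \<Rightarrow> nat \<Rightarrow> nat \<Rightarrow> real" where
  "C \<gamma> a b = g (zb \<gamma>) (br (eb a) (eb b))"

lemma C_anti: "C \<gamma> a b = - C \<gamma> b a"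
  unfolding C_def using br_anti by (metis g_simps(8))
lemma C_diag[simp]: "C \<gamma> a a = 0"
  unfolding C_def by simp

lemma gJJ: "g (J (zb \<beta>) (eb a)) (J (zb \<gamma>) (eb b)) = (\<Sum>c<n. s c * C \<beta> a c * C \<gamma> b c)"
proof -
  have "g (J (zb \<beta>) (eb a)) (J (zb \<gamma>) (eb b)) =
     (\<Sum>c<n. s c * g (J (zb \<beta>) (eb a)) (eb c) * g (J (zb \<gamma>) (eb b)) (eb c))"
    by (rule gEE[OF J_inE J_inE])
  then show ?thesis by (simp add: J_g C_def)
qed

lemma rho_ee: "a < n \<Longrightarrow> b < n \<Longrightarrow> rho (eb a) (eb b) = -(1/2) * (\<Sum>\<gamma><m. \<Sum>c<n. s c * C \<gamma> a c * C \<gamma> b c)"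
  by (simp add: rho_EE eb_in gJJ)

lemma rho_zz: "\<beta> < m \<Longrightarrow> \<gamma> < m \<Longrightarrow> rho (zb \<beta>) (zb \<gamma>) = (1/4) * (\<Sum>a<n. s a * (\<Sum>c<n. s c * C \<beta> a c * C \<gamma> a c))"
  by (simp add: rho_ZZ zb_in gJJ)

lemma Ric_z: "\<gamma> < m \<Longrightarrow> Ric (zb \<gamma>) = (\<Sum>\<alpha><m. rho (zb \<gamma>) (zb \<alpha>) *\<^sub>R zb \<alpha>)"
  by (simp add: Ric_expand rho_ZE zb_in eb_in)

lemma Ric_e: "a < n \<Longrightarrow> Ric (eb a) = (\<Sum>b<n. (s b * rho (eb a) (eb b)) *\<^sub>R eb b)"
  by (simp add: Ric_expand rho_EZ zb_in eb_in)

abbreviation io where "io \<equiv> iota g zb m eb n"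

lemma io_Z: "z \<in> Z \<Longrightarrow> io z = z"
proof -
  assume zZ: "z \<in> Z"
  have "io z = pZ z" unfolding iota_def pZ_def using ZE[OF eb_in zZ] by simp
  then show ?thesis using expandZ[OF zZ] by simp
qed

lemma io_E: "x \<in> E \<Longrightarrow> io x = (\<Sum>a<n. g x (eb a) *\<^sub>R eb a)"
  unfolding iota_def using EZ[OF _ zb_in] by simp

lemma g_io_E: "x \<in> E \<Longrightarrow> c < n \<Longrightarrow> g (io x) (eb c) = g x (eb c) * s c"
  by (simp add: io_E sumE)

lemma pH_use: "z \<in> Z \<Longrightarrow> x \<in> E \<Longrightarrow> io (J z (io (J z x))) = -(g z z) *\<^sub>R x"
  using pH unfolding pH_type_def jmap_def by (simp add: io_Z)

lemma pHc: "z \<in> Z \<Longrightarrow> a < n \<Longrightarrow> c < n \<Longrightarrow>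
  (\<Sum>b<n. g z (br (eb a) (eb b)) * g z (br (eb b) (eb c))) = -(g z z) * (if a = c then 1 else 0)"
proof -
  assume zZ: "z \<in> Z" and a: "a < n" and c: "c < n"
  have "g (io (J z (io (J z (eb a))))) (eb c) = -(g z z) * g (eb a) (eb c)"
    using pH_use[OF zZ eb_in[OF a]] by simp
  moreover have "g (io (J z (io (J z (eb a))))) (eb c) =
     (\<Sum>b<n. g z (br (eb a) (eb b)) * g z (br (eb b) (eb c))) * s c"
  proof -
    have A: "g (io (J z (io (J z (eb a))))) (eb c) = g z (br (io (J z (eb a))) (eb c)) * s c"
      using g_io_E[OF J_inE c] J_g by simp
    have B: "g z (br (io (J z (eb a))) (eb c)) = (\<Sum>b<n. g z (br (eb a) (eb b)) * g z (br (eb b) (eb c)))"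
      by (simp add: io_E[OF J_inE] J_g)
    show ?thesis by (simp only: A B)
  qed
  ultimately have "(\<Sum>b<n. g z (br (eb a) (eb b)) * g z (br (eb b) (eb c))) * s c
      = -(g z z) * (if a = c then s c else 0)" using ee[OF a c] by auto
  then have "(\<Sum>b<n. g z (br (eb a) (eb b)) * g z (br (eb b) (eb c))) * s c * s c
      = -(g z z) * (if a = c then 1 else 0) * s c * s c"
    by (auto simp: mult_ac)
  then show ?thesis using ss[OF c] by (simp add: mult.assoc)
qed

lemma Q1: "\<beta> < m \<Longrightarrow> a < n \<Longrightarrow> c < n \<Longrightarrow> (\<Sum>b<n. C \<beta> a b * C \<beta> b c) = -(if a = c then 1 else 0)"
  using pHc[OF zb_in] zz1 unfolding C_def by simp

lemma Q2: "\<beta> < m \<Longrightarrow> \<gamma> < m \<Longrightarrow> \<beta> \<noteq> \<gamma> \<Longrightarrow> a < n \<Longrightarrow> c < n \<Longrightarrow>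
   (\<Sum>b<n. C \<beta> a b * C \<gamma> b c + C \<gamma> a b * C \<beta> b c) = 0"
proof -
  assume b: "\<beta> < m" and g': "\<gamma> < m" and ne: "\<beta> \<noteq> \<gamma>" and a: "a < n" and c: "c < n"
  have zin: "zb \<beta> + zb \<gamma> \<in> Z" using zb_in b g' subspace_add[OF subspZ] by blast
  have gzz: "g (zb \<beta> + zb \<gamma>) (zb \<beta> + zb \<gamma>) = 2" using zz[OF b b] zz[OF b g'] zz[OF g' b] zz[OF g' g'] ne by simp
  have "(\<Sum>b<n. (C \<beta> a b + C \<gamma> a b) * (C \<beta> b c + C \<gamma> b c)) = -2 * (if a = c then 1 else 0)"
    using pHc[OF zin a c] gzz unfolding C_def by simp
  moreover have "(\<Sum>b<n. (C \<beta> a b + C \<gamma> a b) * (C \<beta> b c + C \<gamma> b c)) =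
    (\<Sum>b<n. C \<beta> a b * C \<beta> b c) + (\<Sum>b<n. C \<gamma> a b * C \<gamma> b c) + (\<Sum>b<n. C \<beta> a b * C \<gamma> b c + C \<gamma> a b * C \<beta> b c)"
    by (simp add: sum.distrib[symmetric] algebra_simps)
  ultimately show ?thesis using Q1[OF b a c] Q1[OF g' a c] by simp
qed

lemma Q: "\<beta> < m \<Longrightarrow> \<gamma> < m \<Longrightarrow> a < n \<Longrightarrow> c < n \<Longrightarrow>
   (\<Sum>b<n. C \<beta> a b * C \<gamma> b c + C \<gamma> a b * C \<beta> b c) = (if \<beta> = \<gamma> \<and> a = c then -2 else 0)"
proof (cases "\<beta> = \<gamma>")
  case True
  assume "\<beta> < m" "\<gamma> < m" "a < n" "c < n"
  have "(\<Sum>b<n. C \<beta> a b * C \<beta> b c + C \<beta> a b * C \<beta> b c) =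
      (\<Sum>b<n. C \<beta> a b * C \<beta> b c) + (\<Sum>b<n. C \<beta> a b * C \<beta> b c)" by (rule sum.distrib)
  then show ?thesis using True Q1[of \<beta> a c] \<open>\<beta> < m\<close> \<open>a < n\<close> \<open>c < n\<close> by simp
next
  case False
  assume "\<beta> < m" "\<gamma> < m" "a < n" "c < n"
  then show ?thesis using False Q2 by simp
qed

lemma neg_exists: "\<exists>a<n. s a = -1"
proof (rule ccontr)
  assume "\<not> (\<exists>a<n. s a = -1)"
  then have s1: "\<And>a. a < n \<Longrightarrow> s a = 1" using s_pm by blast
  obtain v where v: "g v v < 0" using lor by (auto simp: lorentzian_def)
  have "g v v = (\<Sum>\<alpha><m. g v (zb \<alpha>) * g v (zb \<alpha>)) + (\<Sum>a<n. g v (eb a) * g v (eb a))"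
    using g_expand[of v v] s1 by (simp add: g_sym[of "zb _"] g_sym[of "eb _"])
  also have "\<dots> \<ge> 0" by (intro add_nonneg_nonneg sum_nonneg) auto
  finally show False using v by simp
qed

lemma neg_unique: "a < n \<Longrightarrow> b < n \<Longrightarrow> s a = -1 \<Longrightarrow> s b = -1 \<Longrightarrow> a = b"
proof (rule ccontr)
  assume a: "a < n" and b: "b < n" and sa: "s a = -1" and sb: "s b = -1" and ne: "a \<noteq> b"
  let ?S = "span {eb a, eb b}"
  have gab: "g (eb a) (eb b) = 0" "g (eb b) (eb a) = 0" using ee[OF a b] ee[OF b a] ne by auto
  have gaa: "g (eb a) (eb a) = -1" "g (eb b) (eb b) = -1" using sa sb by (auto simp: s_def)
  have neg: "\<forall>v\<in>?S. v \<noteq> 0 \<longrightarrow> g v v < 0"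
  proof (intro ballI impI)
    fix v assume vS: "v \<in> ?S" and v0: "v \<noteq> 0"
    obtain k where "v - k *\<^sub>R eb a \<in> span {eb b}" using vS span_breakdown_eq by blast
    then obtain t where "v - k *\<^sub>R eb a = t *\<^sub>R eb b" using span_singleton by (metis imageE)
    then have vt: "v = k *\<^sub>R eb a + t *\<^sub>R eb b" by (simp add: algebra_simps)
    have "g v v = - (k * k + t * t)" using vt gab gaa by (simp add: algebra_simps)
    moreover have "k \<noteq> 0 \<or> t \<noteq> 0" using vt v0 by auto
    moreover have "k * k + t * t > 0" using calculation(2)
      by (simp add: sum_squares_gt_zero_iff)
    ultimately show "g v v < 0" by linarith
  qed
  have "dim ?S \<le> 1" using lor neg by (auto simp: lorentzian_def)
  moreover have "independent {eb a, eb b}"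
  proof -
    have eb0: "eb b \<noteq> 0" using gaa by auto
    have ne2: "eb a \<noteq> eb b" using gab gaa by auto
    have "eb a \<notin> span {eb b}"
    proof
      assume "eb a \<in> span {eb b}"
      then obtain t where "eb a = t *\<^sub>R eb b" using span_singleton by auto
      then show False using gab gaa by simp
    qed
    then show ?thesis using eb0 ne2 by (simp add: independent_insert)
  qed
  then have "dim ?S = card {eb a, eb b}" by (rule dim_span_eq_card_independent)
  then have "dim ?S = 2" using gab gaa by (auto simp: card_insert_if)
  ultimately show False by simp
qed

end

locale pHs0 = pHs +
  fixes a0 :: nat
  assumes a0n: "a0 < n" and s_eq: "\<And>c. c < n \<Longrightarrow> s c = (if c = a0 then -1 else 1)"
begin

lemma sum_s: "(\<Sum>c<n. s c * f c) = (\<Sum>c<n. f c) - 2 * f a0"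
proof -
  have "(\<Sum>c<n. s c * f c) = (\<Sum>c<n. f c - (if c = a0 then 2 * f c else 0))"
    by (rule sum.cong) (auto simp: s_eq)
  also have "\<dots> = (\<Sum>c<n. f c) - 2 * f a0" using a0n by (simp add: sum_subtractf)
  finally show ?thesis .
qed

definition P :: "nat \<Rightarrow> nat \<Rightarrow> real" where "P a d = (\<Sum>\<gamma><m. C \<gamma> a0 a * C \<gamma> a0 d)"

lemma D1: "\<gamma> < m \<Longrightarrow> a < n \<Longrightarrow> c < n \<Longrightarrow> (\<Sum>b<n. C \<gamma> a b * C \<gamma> c b) = (if a = c then 1 else 0)"
proof -
  assume h: "\<gamma> < m" "a < n" "c < n"
  have "(\<Sum>b<n. C \<gamma> a b * C \<gamma> c b) = - (\<Sum>b<n. C \<gamma> a b * C \<gamma> b c)"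
    by (simp add: C_anti[of \<gamma> c] sum_negf)
  then show ?thesis using Q1[OF h] by simp
qed

lemma Dsym: "\<beta> < m \<Longrightarrow> \<gamma> < m \<Longrightarrow> a < n \<Longrightarrow> c < n \<Longrightarrow>
   (\<Sum>b<n. C \<beta> a b * C \<gamma> c b + C \<gamma> a b * C \<beta> c b) = (if \<beta> = \<gamma> \<and> a = c then 2 else 0)"
proof -
  assume h: "\<beta> < m" "\<gamma> < m" "a < n" "c < n"
  have "(\<Sum>b<n. C \<beta> a b * C \<gamma> c b + C \<gamma> a b * C \<beta> c b) =
      - (\<Sum>b<n. C \<beta> a b * C \<gamma> b c + C \<gamma> a b * C \<beta> b c)"
    by (simp add: C_anti[of \<gamma> c] C_anti[of \<beta> c] sum_negf[symmetric] algebra_simps)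
  then show ?thesis using Q[OF h] by simp
qed

lemma D2: "\<beta> < m \<Longrightarrow> \<gamma> < m \<Longrightarrow> (\<Sum>b<n. C \<beta> a0 b * C \<gamma> a0 b) = (if \<beta> = \<gamma> then 1 else 0)"
proof -
  assume h: "\<beta> < m" "\<gamma> < m"
  have "(\<Sum>b<n. C \<beta> a0 b * C \<gamma> a0 b + C \<gamma> a0 b * C \<beta> a0 b) = 2 * (\<Sum>b<n. C \<beta> a0 b * C \<gamma> a0 b)"
    by (simp add: sum_distrib_left mult.commute)
  then show ?thesis using Dsym[OF h a0n a0n] by auto
qed

lemma D3: "\<beta> < m \<Longrightarrow> \<gamma> < m \<Longrightarrow> (\<Sum>a<n. \<Sum>b<n. C \<beta> a b * C \<gamma> a b) = real n * (if \<beta> = \<gamma> then 1 else 0)"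
proof -
  assume h: "\<beta> < m" "\<gamma> < m"
  have "(\<Sum>b<n. C \<beta> a b * C \<gamma> a b + C \<gamma> a b * C \<beta> a b) = 2 * (\<Sum>b<n. C \<beta> a b * C \<gamma> a b)" for a
    by (simp add: sum_distrib_left mult.commute)
  then have "a < n \<Longrightarrow> (\<Sum>b<n. C \<beta> a b * C \<gamma> a b) = (if \<beta> = \<gamma> then 1 else 0)" for a
    using Dsym[OF h, of a a] by auto
  then show ?thesis by simp
qed

lemma P_a0[simp]: "P a a0 = 0" "P a0 d = 0" by (simp_all add: P_def)
lemma P_sym: "P a d = P d a" by (simp add: P_def mult.commute)
lemma sP: "d < n \<Longrightarrow> s d * P a d = P a d" using s_eq by auto

lemma trP: "(\<Sum>a<n. P a a) = real m"
proof -
  have "(\<Sum>a<n. P a a) = (\<Sum>\<gamma><m. \<Sum>a<n. C \<gamma> a0 a * C \<gamma> a0 a)"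
    unfolding P_def by (rule sum.swap)
  also have "\<dots> = (\<Sum>\<gamma><m. 1)" by (rule sum.cong) (auto simp: D2)
  finally show ?thesis by simp
qed

lemma PP: "b < n \<Longrightarrow> e < n \<Longrightarrow> (\<Sum>d<n. P b d * P d e) = P b e"
proof -
  have "(\<Sum>d<n. P b d * P d e) = (\<Sum>d<n. \<Sum>\<beta><m. \<Sum>\<gamma><m. C \<beta> a0 b * C \<gamma> a0 e * (C \<beta> a0 d * C \<gamma> a0 d))"
    unfolding P_def sum_product by (rule sum.cong[OF refl], rule sum.cong[OF refl], rule sum.cong[OF refl]) (simp add: mult_ac)
  also have "\<dots> = (\<Sum>\<beta><m. \<Sum>\<gamma><m. \<Sum>d<n. C \<beta> a0 b * C \<gamma> a0 e * (C \<beta> a0 d * C \<gamma> a0 d))"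
    by (rule swap3)
  also have "\<dots> = (\<Sum>\<beta><m. \<Sum>\<gamma><m. C \<beta> a0 b * C \<gamma> a0 e * (\<Sum>d<n. C \<beta> a0 d * C \<gamma> a0 d))"
    by (simp add: sum_distrib_left)
  also have "\<dots> = (\<Sum>\<beta><m. \<Sum>\<gamma><m. if \<beta> = \<gamma> then C \<beta> a0 b * C \<gamma> a0 e else 0)"
    by (rule sum.cong[OF refl], rule sum.cong[OF refl]) (simp add: D2)
  also have "\<dots> = P b e" by (simp add: P_def)
  finally show ?thesis .
qed

lemma sumPP: "(\<Sum>b<n. \<Sum>d<n. P b d * P b d) = real m"
proof -
  have "(\<Sum>b<n. \<Sum>d<n. P b d * P b d) = (\<Sum>b<n. P b b)"
  proof (rule sum.cong[OF refl])
    fix b assume "b \<in> {..<n}"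
    then have b: "b < n" by simp
    have "(\<Sum>d<n. P b d * P b d) = (\<Sum>d<n. P b d * P d b)"
      by (rule sum.cong[OF refl]) (simp only: P_sym[of d b for d])
    then show "(\<Sum>d<n. P b d * P b d) = P b b" using PP[OF b b] by simp
  qed
  then show ?thesis using trP by simp
qed

lemma Pbb_le: "b < n \<Longrightarrow> P b b \<le> 1"
proof -
  assume b: "b < n"
  have "0 \<le> (\<Sum>d<n. ((if b = d then 1 else 0) - P b d) * ((if b = d then 1 else 0) - P b d))"
    by (rule sum_nonneg) simp
  also have "\<dots> = (\<Sum>d<n. (if b = d then 1 - 2 * P b d else 0) + P b d * P d b)"
    by (rule sum.cong[OF refl]) (auto simp: algebra_simps P_sym[of _ b])
  also have "\<dots> = 1 - 2 * P b b + P b b" using b by (simp add: sum.distrib PP)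
  finally show ?thesis by simp
qed

lemma m_le: "m + 1 \<le> n"
proof -
  have "real m = (\<Sum>b<n. P b b)" using trP by simp
  also have "\<dots> \<le> (\<Sum>b<n. if b = a0 then 0 else 1)"
    by (rule sum_mono) (auto simp: Pbb_le)
  also have "\<dots> = (\<Sum>b<n. 1 - (if b = a0 then 1 else 0))" by (rule sum.cong) auto
  also have "\<dots> = real n - 1" using a0n by (simp add: sum_subtractf)
  finally show ?thesis by simp
qed

lemma m_pos: "m > 0"
proof (rule ccontr)
  assume "\<not> m > 0"
  then have "Z = {0}" using spanZ by simp
  moreover obtain x y where "br x y \<noteq> 0" using nil by (auto simp: two_step_nilpotent_def)
  ultimately show False using br_inZ by blast
qed

lemma sum_s1: "(\<Sum>c<n. s c) = real n - 2"
  using sum_s[of "\<lambda>c. 1"] by simp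

lemma rho_zz': "\<beta> < m \<Longrightarrow> \<gamma> < m \<Longrightarrow> rho (zb \<beta>) (zb \<gamma>) = (real n - 4) / 4 * (if \<beta> = \<gamma> then 1 else 0)"
proof -
  assume h: "\<beta> < m" "\<gamma> < m"
  have inner: "(\<Sum>c<n. s c * C \<beta> a c * C \<gamma> a c) = (\<Sum>c<n. C \<beta> a c * C \<gamma> a c) - 2 * (C \<beta> a0 a * C \<gamma> a0 a)" for a
    using sum_s[of "\<lambda>c. C \<beta> a c * C \<gamma> a c"] by (simp add: mult.assoc C_anti[of _ a a0])
  have "(\<Sum>a<n. s a * (\<Sum>c<n. s c * C \<beta> a c * C \<gamma> a c)) =
     (\<Sum>a<n. s a * ((\<Sum>c<n. C \<beta> a c * C \<gamma> a c) - 2 * (C \<beta> a0 a * C \<gamma> a0 a)))"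
    by (simp add: inner)
  also have "\<dots> = (\<Sum>a<n. (\<Sum>c<n. C \<beta> a c * C \<gamma> a c) - 2 * (C \<beta> a0 a * C \<gamma> a0 a))
     - 2 * ((\<Sum>c<n. C \<beta> a0 c * C \<gamma> a0 c) - 2 * (C \<beta> a0 a0 * C \<gamma> a0 a0))"
    by (rule sum_s)
  also have "\<dots> = real n * (if \<beta> = \<gamma> then 1 else 0) - 4 * (if \<beta> = \<gamma> then 1 else 0)"
    using D3[OF h] D2[OF h] by (simp add: sum_subtractf sum_distrib_left[symmetric])
  finally show ?thesis using rho_zz[OF h] by (simp add: algebra_simps)
qed

lemma Ric_z': "\<gamma> < m \<Longrightarrow> Ric (zb \<gamma>) = ((real n - 4) / 4) *\<^sub>R zb \<gamma>"
proof -
  assume h: "\<gamma> < m"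
  have "(\<Sum>\<alpha><m. rho (zb \<gamma>) (zb \<alpha>) *\<^sub>R zb \<alpha>) = (\<Sum>\<alpha><m. if \<gamma> = \<alpha> then ((real n - 4) / 4) *\<^sub>R zb \<gamma> else 0)"
    by (rule sum.cong) (auto simp: rho_zz' h)
  then show ?thesis using h by (simp add: Ric_z)
qed

lemma rho_ee': "a < n \<Longrightarrow> b < n \<Longrightarrow> rho (eb a) (eb b) = -(1/2) * (real m * (if a = b then 1 else 0)) + P a b"
proof -
  assume h: "a < n" "b < n"
  have inner: "(\<Sum>c<n. s c * C \<gamma> a c * C \<gamma> b c) = (if a = b then 1 else 0) - 2 * (C \<gamma> a0 a * C \<gamma> a0 b)"
    if g': "\<gamma> < m" for \<gamma>
    using sum_s[of "\<lambda>c. C \<gamma> a c * C \<gamma> b c"] D1[OF g' h]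
    by (simp add: mult.assoc C_anti[of _ a a0] C_anti[of _ b a0])
  have "(\<Sum>\<gamma><m. \<Sum>c<n. s c * C \<gamma> a c * C \<gamma> b c) = (\<Sum>\<gamma><m. (if a = b then 1 else 0) - 2 * (C \<gamma> a0 a * C \<gamma> a0 b))"
    by (rule sum.cong) (auto simp: inner)
  also have "\<dots> = real m * (if a = b then 1 else 0) - 2 * P a b"
    by (simp add: sum_subtractf P_def sum_distrib_left)
  finally have X: "(\<Sum>\<gamma><m. \<Sum>c<n. s c * C \<gamma> a c * C \<gamma> b c) = real m * (if a = b then 1 else 0) - 2 * P a b" .
  show ?thesis using rho_ee[OF h] X by (simp add: field_simps)
qed

lemma br_ee: "br (eb a) (eb b) = (\<Sum>\<beta><m. C \<beta> a b *\<^sub>R zb \<beta>)"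
  using expandZ[OF br_inZ] unfolding pZ_def C_def by (simp add: g_sym[of "br _ _"])

lemma gRicbr: "\<gamma> < m \<Longrightarrow> g (zb \<gamma>) (Ric (br (eb a) (eb b))) = (real n - 4) / 4 * C \<gamma> a b"
proof -
  assume h: "\<gamma> < m"
  have "Ric (br (eb a) (eb b)) = (\<Sum>\<beta><m. C \<beta> a b *\<^sub>R Ric (zb \<beta>))"
    by (simp add: br_ee linear_sum[OF Ric_lin] linear_scale[OF Ric_lin])
  also have "\<dots> = (\<Sum>\<beta><m. (C \<beta> a b * ((real n - 4) / 4)) *\<^sub>R zb \<beta>)"
    by (rule sum.cong) (auto simp: Ric_z')
  finally show ?thesis using sumZ[OF h, of "\<lambda>\<beta>. C \<beta> a b * ((real n - 4) / 4)"] h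
    by (simp add: g_sym[of "zb \<gamma>"] mult.commute)
qed

lemma gbrRic1: "a < n \<Longrightarrow> g (zb \<gamma>) (br (Ric (eb a)) (eb b)) = (\<Sum>d<n. s d * rho (eb a) (eb d) * C \<gamma> d b)"
  by (simp add: Ric_e C_def mult_ac)
lemma gbrRic2: "b < n \<Longrightarrow> g (zb \<gamma>) (br (eb a) (Ric (eb b))) = (\<Sum>d<n. s d * rho (eb b) (eb d) * C \<gamma> a d)"
  by (simp add: Ric_e C_def mult_ac)

lemma T1: "a < n \<Longrightarrow> (\<Sum>d<n. s d * rho (eb a) (eb d) * C \<gamma> d b) = -(real m / 2) * s a * C \<gamma> a b + (\<Sum>d<n. P a d * C \<gamma> d b)"
proof -
  assume a: "a < n"
  have "(\<Sum>d<n. s d * rho (eb a) (eb d) * C \<gamma> d b) =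
      (\<Sum>d<n. (if a = d then -(real m / 2) * s a * C \<gamma> a b else 0) + P a d * C \<gamma> d b)"
    by (rule sum.cong[OF refl]) (auto simp: rho_ee' a sP algebra_simps)
  then show ?thesis using a by (simp add: sum.distrib)
qed

lemma T2: "b < n \<Longrightarrow> (\<Sum>d<n. s d * rho (eb b) (eb d) * C \<gamma> a d) = -(real m / 2) * s b * C \<gamma> a b + (\<Sum>d<n. P b d * C \<gamma> a d)"
proof -
  assume b: "b < n"
  have "(\<Sum>d<n. s d * rho (eb b) (eb d) * C \<gamma> a d) =
      (\<Sum>d<n. (if b = d then -(real m / 2) * s b * C \<gamma> a b else 0) + P b d * C \<gamma> a d)"
    by (rule sum.cong[OF refl]) (auto simp: rho_ee' b sP algebra_simps)
  then show ?thesis using b by (simp add: sum.distrib)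
qed

end


context pHs0
begin

definition Deq :: "real \<Rightarrow> bool" where
  "Deq K \<longleftrightarrow> (\<forall>\<gamma><m. \<forall>a<n. \<forall>b<n. K * C \<gamma> a b =
     -(real m / 2) * (s a + s b) * C \<gamma> a b + (\<Sum>d<n. P a d * C \<gamma> d b) + (\<Sum>d<n. P b d * C \<gamma> a d))"

lemma deriv_Deq: "derivation br D \<Longrightarrow> (\<forall>x. Ric x = c *\<^sub>R x + D x) \<Longrightarrow> Deq ((real n - 4) / 4 + c)"
proof -
  assume der: "derivation br D" and RD: "\<forall>x. Ric x = c *\<^sub>R x + D x"
  have Dx: "D x = Ric x - c *\<^sub>R x" for x using RD by (metis add_diff_cancel_left')
  show ?thesis unfolding Deq_def
  proof (intro allI impI)
    fix \<gamma> a b assume g': "\<gamma> < m" and a: "a < n" and b: "b < n"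
    have "D (br (eb a) (eb b)) = br (D (eb a)) (eb b) + br (eb a) (D (eb b))"
      using der by (simp add: derivation_def)
    then have "g (zb \<gamma>) (D (br (eb a) (eb b))) = g (zb \<gamma>) (br (D (eb a)) (eb b)) + g (zb \<gamma>) (br (eb a) (D (eb b)))"
      by simp
    then have "(real n - 4) / 4 * C \<gamma> a b - c * C \<gamma> a b =
        (\<Sum>d<n. s d * rho (eb a) (eb d) * C \<gamma> d b) - c * C \<gamma> a b +
        ((\<Sum>d<n. s d * rho (eb b) (eb d) * C \<gamma> a d) - c * C \<gamma> a b)"
      by (simp add: Dx gRicbr[OF g'] gbrRic1[OF a] gbrRic2[OF b] C_def)
    from this[unfolded T1[OF a] T2[OF b]]
    show "((real n - 4) / 4 + c) * C \<gamma> a b =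
     -(real m / 2) * (s a + s b) * C \<gamma> a b + (\<Sum>d<n. P a d * C \<gamma> d b) + (\<Sum>d<n. P b d * C \<gamma> a d)"
      by (simp only: distrib_right distrib_left left_diff_distrib right_diff_distrib)
  qed
qed

lemma Deq_at: "Deq K \<Longrightarrow> \<gamma> < m \<Longrightarrow> a < n \<Longrightarrow> b < n \<Longrightarrow> K * C \<gamma> a b =
     -(real m / 2) * (s a + s b) * C \<gamma> a b + (\<Sum>d<n. P a d * C \<gamma> d b) + (\<Sum>d<n. P b d * C \<gamma> a d)"
  unfolding Deq_def by blast

lemma W1: "Deq K \<Longrightarrow> K = 1"
proof -
  assume dq: "Deq K"
  have E1: "K * C \<gamma> a0 b = (\<Sum>d<n. P b d * C \<gamma> a0 d)" if g': "\<gamma> < m" and b: "b < n" for \<gamma> b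
  proof -
    have "(s a0 + s b) * C \<gamma> a0 b = 0"
      using b s_eq[OF a0n] s_eq[OF b] by (cases "b = a0") auto
    then show ?thesis using Deq_at[OF dq g' a0n b] by simp
  qed
  have "(\<Sum>\<gamma><m. \<Sum>b<n. C \<gamma> a0 b * (K * C \<gamma> a0 b)) = (\<Sum>\<gamma><m. K * (\<Sum>b<n. C \<gamma> a0 b * C \<gamma> a0 b))"
    by (simp add: sum_distrib_left mult_ac)
  also have "\<dots> = (\<Sum>\<gamma><m. K)" by (rule sum.cong) (auto simp: D2)
  finally have L: "(\<Sum>\<gamma><m. \<Sum>b<n. C \<gamma> a0 b * (K * C \<gamma> a0 b)) = K * real m" by simp
  have "(\<Sum>\<gamma><m. \<Sum>b<n. C \<gamma> a0 b * (K * C \<gamma> a0 b)) =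
        (\<Sum>\<gamma><m. \<Sum>b<n. \<Sum>d<n. P b d * (C \<gamma> a0 b * C \<gamma> a0 d))"
    by (rule sum.cong[OF refl], rule sum.cong[OF refl]) (simp add: E1 sum_distrib_left mult_ac)
  also have "\<dots> = (\<Sum>b<n. \<Sum>d<n. \<Sum>\<gamma><m. P b d * (C \<gamma> a0 b * C \<gamma> a0 d))" by (rule swap3)
  also have "\<dots> = (\<Sum>b<n. \<Sum>d<n. P b d * P b d)"
  proof (rule sum.cong[OF refl], rule sum.cong[OF refl])
    fix b d
    have "(\<Sum>\<gamma><m. P b d * (C \<gamma> a0 b * C \<gamma> a0 d)) = P b d * (\<Sum>\<gamma><m. C \<gamma> a0 b * C \<gamma> a0 d)"
      by (rule sum_distrib_left[symmetric])
    also have "(\<Sum>\<gamma><m. C \<gamma> a0 b * C \<gamma> a0 d) = P b d" by (simp add: P_def)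
    finally show "(\<Sum>\<gamma><m. P b d * (C \<gamma> a0 b * C \<gamma> a0 d)) = P b d * P b d" .
  qed
  also have "\<dots> = real m" by (rule sumPP)
  finally have "K * real m = real m" using L by simp
  then show "K = 1" using m_pos by simp
qed

lemma H1: "(\<Sum>\<gamma><m. \<Sum>a<n. \<Sum>b<n. C \<gamma> a b * (K * C \<gamma> a b)) = K * real m * real n"
proof -
  have "(\<Sum>\<gamma><m. \<Sum>a<n. \<Sum>b<n. C \<gamma> a b * (K * C \<gamma> a b)) = (\<Sum>\<gamma><m. K * (\<Sum>a<n. \<Sum>b<n. C \<gamma> a b * C \<gamma> a b))"
    by (simp add: sum_distrib_left mult_ac)
  also have "\<dots> = (\<Sum>\<gamma><m. K * real n)" by (rule sum.cong) (auto simp: D3)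
  finally show ?thesis by simp
qed

lemma CC1: "\<gamma> < m \<Longrightarrow> a < n \<Longrightarrow> (\<Sum>b<n. C \<gamma> a b * C \<gamma> a b) = 1"
  using D1[of \<gamma> a a] by simp
lemma CC2: "\<gamma> < m \<Longrightarrow> b < n \<Longrightarrow> d < n \<Longrightarrow> (\<Sum>a<n. C \<gamma> a b * C \<gamma> a d) = (if b = d then 1 else 0)"
proof -
  assume h: "\<gamma> < m" "b < n" "d < n"
  have "(\<Sum>a<n. C \<gamma> a b * C \<gamma> a d) = (\<Sum>a<n. C \<gamma> b a * C \<gamma> d a)"
    by (rule sum.cong[OF refl]) (metis C_anti minus_mult_minus)
  then show ?thesis using D1[OF h] by simp
qed

lemma H2a: "(\<Sum>\<gamma><m. \<Sum>a<n. \<Sum>b<n. s a * (C \<gamma> a b * C \<gamma> a b)) = real m * (real n - 2)"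
proof -
  have "(\<Sum>\<gamma><m. \<Sum>a<n. \<Sum>b<n. s a * (C \<gamma> a b * C \<gamma> a b)) = (\<Sum>\<gamma><m. \<Sum>a<n. s a * (\<Sum>b<n. C \<gamma> a b * C \<gamma> a b))"
    by (simp add: sum_distrib_left)
  also have "\<dots> = (\<Sum>\<gamma><m. \<Sum>a<n. s a)"
    by (rule sum.cong[OF refl], rule sum.cong[OF refl]) (simp add: CC1)
  finally show ?thesis by (simp add: sum_s1)
qed

lemma H2b: "(\<Sum>\<gamma><m. \<Sum>a<n. \<Sum>b<n. s b * (C \<gamma> a b * C \<gamma> a b)) = real m * (real n - 2)"
proof -
  have "(\<Sum>\<gamma><m. \<Sum>a<n. \<Sum>b<n. s b * (C \<gamma> a b * C \<gamma> a b)) = (\<Sum>\<gamma><m. \<Sum>b<n. \<Sum>a<n. s b * (C \<gamma> a b * C \<gamma> a b))"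
    by (rule sum.cong[OF refl]) (rule sum.swap)
  also have "\<dots> = (\<Sum>\<gamma><m. \<Sum>b<n. s b * (\<Sum>a<n. C \<gamma> a b * C \<gamma> a b))"
    by (simp add: sum_distrib_left)
  also have "\<dots> = (\<Sum>\<gamma><m. \<Sum>b<n. s b)"
    by (rule sum.cong[OF refl], rule sum.cong[OF refl]) (simp add: CC2)
  finally show ?thesis by (simp add: sum_s1)
qed

lemma H3: "(\<Sum>\<gamma><m. \<Sum>a<n. \<Sum>b<n. C \<gamma> a b * (\<Sum>d<n. P a d * C \<gamma> d b)) = real m * real m"
proof -
  have inner: "(\<Sum>b<n. C \<gamma> a b * (\<Sum>d<n. P a d * C \<gamma> d b)) = P a a" if g': "\<gamma> < m" and a: "a < n" for \<gamma> a
  proof -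
    have "(\<Sum>b<n. C \<gamma> a b * (\<Sum>d<n. P a d * C \<gamma> d b)) = (\<Sum>b<n. \<Sum>d<n. P a d * (C \<gamma> a b * C \<gamma> d b))"
      by (simp add: sum_distrib_left mult_ac)
    also have "\<dots> = (\<Sum>d<n. \<Sum>b<n. P a d * (C \<gamma> a b * C \<gamma> d b))" by (rule sum.swap)
    also have "\<dots> = (\<Sum>d<n. P a d * (\<Sum>b<n. C \<gamma> a b * C \<gamma> d b))" by (simp add: sum_distrib_left)
    also have "\<dots> = (\<Sum>d<n. if a = d then P a d else 0)"
      by (rule sum.cong[OF refl]) (simp add: D1[OF g' a])
    finally show ?thesis using a by simp
  qed
  have "(\<Sum>\<gamma><m. \<Sum>a<n. \<Sum>b<n. C \<gamma> a b * (\<Sum>d<n. P a d * C \<gamma> d b)) = (\<Sum>\<gamma><m. \<Sum>a<n. P a a)"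
    by (rule sum.cong[OF refl], rule sum.cong[OF refl]) (simp add: inner)
  then show ?thesis by (simp add: trP)
qed

lemma H4: "(\<Sum>\<gamma><m. \<Sum>a<n. \<Sum>b<n. C \<gamma> a b * (\<Sum>d<n. P b d * C \<gamma> a d)) = real m * real m"
proof -
  have inner: "(\<Sum>a<n. \<Sum>b<n. C \<gamma> a b * (\<Sum>d<n. P b d * C \<gamma> a d)) = (\<Sum>b<n. P b b)" if g': "\<gamma> < m" for \<gamma>
  proof -
    have "(\<Sum>a<n. \<Sum>b<n. C \<gamma> a b * (\<Sum>d<n. P b d * C \<gamma> a d)) = (\<Sum>a<n. \<Sum>b<n. \<Sum>d<n. P b d * (C \<gamma> a b * C \<gamma> a d))"
      by (simp add: sum_distrib_left mult_ac)
    also have "\<dots> = (\<Sum>b<n. \<Sum>d<n. \<Sum>a<n. P b d * (C \<gamma> a b * C \<gamma> a d))" by (rule swap3)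
    also have "\<dots> = (\<Sum>b<n. \<Sum>d<n. P b d * (\<Sum>a<n. C \<gamma> a b * C \<gamma> a d))" by (simp add: sum_distrib_left)
    also have "\<dots> = (\<Sum>b<n. \<Sum>d<n. if b = d then P b d else 0)"
      by (rule sum.cong[OF refl], rule sum.cong[OF refl]) (simp add: CC2[OF g'])
    finally show ?thesis by simp
  qed
  have "(\<Sum>\<gamma><m. \<Sum>a<n. \<Sum>b<n. C \<gamma> a b * (\<Sum>d<n. P b d * C \<gamma> a d)) = (\<Sum>\<gamma><m. \<Sum>b<n. P b b)"
    by (rule sum.cong[OF refl]) (simp add: inner)
  then show ?thesis by (simp add: trP)
qed

lemma W2: "Deq K \<Longrightarrow> K * real m * real n = - real m * real m * (real n - 2) + 2 * real m * real m"
proof -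
  assume dq: "Deq K"
  have pt: "C \<gamma> a b * (K * C \<gamma> a b) =
     -(real m / 2) * (s a * (C \<gamma> a b * C \<gamma> a b)) + -(real m / 2) * (s b * (C \<gamma> a b * C \<gamma> a b))
      + C \<gamma> a b * (\<Sum>d<n. P a d * C \<gamma> d b) + C \<gamma> a b * (\<Sum>d<n. P b d * C \<gamma> a d)"
    if "\<gamma> < m" "a < n" "b < n" for \<gamma> a b
  proof -
    have "C \<gamma> a b * (K * C \<gamma> a b) = C \<gamma> a b * (-(real m / 2) * (s a + s b) * C \<gamma> a b + (\<Sum>d<n. P a d * C \<gamma> d b) + (\<Sum>d<n. P b d * C \<gamma> a d))"
      using Deq_at[OF dq that] by simp
    then show ?thesis by (simp add: algebra_simps)
  qed
  have "K * real m * real n = (\<Sum>\<gamma><m. \<Sum>a<n. \<Sum>b<n. C \<gamma> a b * (K * C \<gamma> a b))" by (simp add: H1)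
  also have "\<dots> = (\<Sum>\<gamma><m. \<Sum>a<n. \<Sum>b<n.
     -(real m / 2) * (s a * (C \<gamma> a b * C \<gamma> a b)) + -(real m / 2) * (s b * (C \<gamma> a b * C \<gamma> a b))
      + C \<gamma> a b * (\<Sum>d<n. P a d * C \<gamma> d b) + C \<gamma> a b * (\<Sum>d<n. P b d * C \<gamma> a d))"
    by (rule sum.cong[OF refl], rule sum.cong[OF refl], rule sum.cong[OF refl]) (simp add: pt)
  also have "\<dots> = -(real m / 2) * (\<Sum>\<gamma><m. \<Sum>a<n. \<Sum>b<n. s a * (C \<gamma> a b * C \<gamma> a b))
     + -(real m / 2) * (\<Sum>\<gamma><m. \<Sum>a<n. \<Sum>b<n. s b * (C \<gamma> a b * C \<gamma> a b))
     + (\<Sum>\<gamma><m. \<Sum>a<n. \<Sum>b<n. C \<gamma> a b * (\<Sum>d<n. P a d * C \<gamma> d b))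
     + (\<Sum>\<gamma><m. \<Sum>a<n. \<Sum>b<n. C \<gamma> a b * (\<Sum>d<n. P b d * C \<gamma> a d))"
    by (simp only: sum.distrib sum_distrib_left)
  also have "\<dots> = - real m * real m * (real n - 2) + 2 * real m * real m"
    by (simp only: H2a H2b H3 H4)
  finally show ?thesis .
qed

lemma nec: "Deq K \<Longrightarrow> m = 1 \<and> n = 2"
proof -
  assume dq: "Deq K"
  have K1: "K = 1" using W1[OF dq] .
  have "real m * real n = - real m * real m * (real n - 2) + 2 * real m * real m" using W2[OF dq] K1 by simp
  then have "real m * (real n + real m * real n - 4 * real m) = 0" by (simp add: algebra_simps)
  then have "real n + real m * real n = 4 * real m" using m_pos by simp
  then have eq: "n + m * n = 4 * m" by (metis of_nat_add of_nat_mult of_nat_eq_iff of_nat_numeral)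
  have le: "m + 1 \<le> n" by (rule m_le)
  then have "(m + 1) * (m + 1) \<le> (m + 1) * n" by (rule mult_le_mono2)
  also have "\<dots> = 4 * m" using eq by (simp add: algebra_simps)
  finally have "(m + 1) * (m + 1) \<le> 4 * m" .
  then have sq: "m * m + 2 * m + 1 \<le> 4 * m" by (simp add: algebra_simps)
  have m1: "m = 1"
  proof (rule ccontr)
    assume "m \<noteq> 1" then have "2 \<le> m" using m_pos by simp
    then have "2 * m \<le> m * m" by simp
    then show False using sq by linarith
  qed
  then show ?thesis using eq by simp
qed

lemma sum2: "(\<Sum>d<(2::nat). f d) = f 0 + f 1"
  by (simp add: numeral_2_eq_2)

lemma Deq1: "m = 1 \<Longrightarrow> n = 2 \<Longrightarrow> Deq 1"
proof -
  assume m1: "m = 1" and n2: "n = 2"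
  have c10: "C 0 (Suc 0) 0 = - C 0 0 (Suc 0)" by (rule C_anti)
  have x2: "C 0 0 (Suc 0) * C 0 0 (Suc 0) = 1" using CC1[of 0 0] m1 n2 by (simp add: sum2)
  have x3: "C 0 0 (Suc 0) * (C 0 0 (Suc 0) * C 0 0 (Suc 0)) = C 0 0 (Suc 0)" using x2 by simp
  have Pd: "P a d = C 0 a0 a * C 0 a0 d" for a d unfolding P_def using m1 by simp
  have a0: "a0 = 0 \<or> a0 = 1" using a0n n2 by auto
  have s01: "s 0 = (if a0 = 0 then -1 else 1)" "s (Suc 0) = (if a0 = Suc 0 then -1 else 1)"
    using s_eq n2 by auto
  show ?thesis unfolding Deq_def
  proof (intro allI impI)
    fix \<gamma> a b assume "\<gamma> < m" "a < n" "b < n"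
    then have g0: "\<gamma> = 0" and a: "a = 0 \<or> a = 1" and b: "b = 0 \<or> b = 1" using m1 n2 by auto
    show "1 * C \<gamma> a b = -(real m / 2) * (s a + s b) * C \<gamma> a b + (\<Sum>d<n. P a d * C \<gamma> d b) + (\<Sum>d<n. P b d * C \<gamma> a d)"
      using a0 a b unfolding Pd unfolding g0 n2 m1 sum2
      by (elim disjE) (simp_all add: c10 s01 x2 x3 mult.assoc)
  qed
qed

lemma Ric_simps: "Ric (x + y) = Ric x + Ric y" "Ric (c *\<^sub>R x) = c *\<^sub>R Ric x" "Ric 0 = 0"
  using linear_add[OF Ric_lin] linear_scale[OF Ric_lin] linear_0[OF Ric_lin] by auto

lemma Ric_Z: "z \<in> Z \<Longrightarrow> Ric z \<in> Z"
proof -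
  assume zZ: "z \<in> Z"
  have "Ric z = (\<Sum>\<alpha><m. rho z (zb \<alpha>) *\<^sub>R zb \<alpha>)"
    by (simp add: Ric_expand rho_ZE[OF zZ eb_in])
  moreover have "(\<Sum>\<alpha><m. rho z (zb \<alpha>) *\<^sub>R zb \<alpha>) \<in> Z"
    by (rule subspace_sum[OF subspZ]) (auto intro: sc_Z zb_in)
  ultimately show ?thesis by simp
qed

lemma suff: "m = 1 \<Longrightarrow> n = 2 \<Longrightarrow> nilsoliton br g"
proof -
  assume m1: "m = 1" and n2: "n = 2"
  define c :: real where "c = 3/2"
  define D where "D x = Ric x - c *\<^sub>R x" for x
  have Dlin: "linear D" unfolding D_def by (rule linearI) (simp_all add: Ric_simps algebra_simps)
  have DZ: "z \<in> Z \<Longrightarrow> D z \<in> Z" for z unfolding D_def using Ric_Z sc_Z subspace_diff[OF subspZ] by simp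
  have D0: "D 0 = 0" using linear_0[OF Dlin] .
  define F where "F x y = D (br x y) - br (D x) y - br x (D y)" for x y
  have Flin1: "linear (\<lambda>x. F x y)" for y
    unfolding F_def by (rule linearI) (simp_all add: linear_add[OF Dlin] linear_scale[OF Dlin] algebra_simps)
  have Flin2: "linear (\<lambda>y. F x y)" for x
    unfolding F_def by (rule linearI) (simp_all add: linear_add[OF Dlin] linear_scale[OF Dlin] algebra_simps)
  have FZ1: "z \<in> Z \<Longrightarrow> F z y = 0" for z y
    unfolding F_def using Z_brl DZ D0 by simp
  have FZ2: "z \<in> Z \<Longrightarrow> F x z = 0" for z x
    unfolding F_def using Z_brr DZ D0 by simp
  have FEE: "F (eb a) (eb b) = 0" if a: "a < n" and b: "b < n" for a b
  proof -
    have inZ: "F (eb a) (eb b) \<in> Z"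
      unfolding F_def D_def using Ric_Z[OF br_inZ] br_inZ sc_Z subspace_diff[OF subspZ] by simp
    have dq: "Deq 1" by (rule Deq1[OF m1 n2])
    have "g (F (eb a) (eb b)) (zb \<gamma>) = 0" if g': "\<gamma> < m" for \<gamma>
    proof -
      have "g (zb \<gamma>) (F (eb a) (eb b)) = (real n - 4) / 4 * C \<gamma> a b + c * C \<gamma> a b
          - (\<Sum>d<n. s d * rho (eb a) (eb d) * C \<gamma> d b) - (\<Sum>d<n. s d * rho (eb b) (eb d) * C \<gamma> a d)"
        unfolding F_def D_def by (simp add: gRicbr[OF g'] gbrRic1[OF a] gbrRic2[OF b] C_def)
      also have "\<dots> = 0"
        unfolding T1[OF a] T2[OF b] using Deq_at[OF dq g' a b] n2 unfolding c_def by (simp add: algebra_simps)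
      finally show ?thesis by (simp add: g_sym)
    qed
    then have "pZ (F (eb a) (eb b)) = 0" unfolding pZ_def by simp
    then show ?thesis using expandZ[OF inZ] by simp
  qed
  have "F x y = 0" for x y
  proof -
    have "F (eb a) y = 0" if a: "a < n" for a
      by (rule lin_ext0[OF Flin2]) (auto simp: FZ2 zb_in FEE a)
    then show ?thesis
      by (intro lin_ext0[OF Flin1, of y x]) (auto simp: FZ1 zb_in)
  qed
  then have "derivation br D" unfolding derivation_def F_def using Dlin by (simp add: algebra_simps)
  moreover have "\<forall>x. Ric x = c *\<^sub>R x + D x" unfolding D_def by simp
  ultimately show ?thesis unfolding nilsoliton_def by blast
qed

end

theorem mainTheorem3:
  fixes br :: "'v::euclidean_space \<Rightarrow> 'v \<Rightarrow> 'v"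
    and g :: "'v \<Rightarrow> 'v \<Rightarrow> real"
    and zb eb :: "nat \<Rightarrow> 'v" and m n :: nat
  assumes "two_step_nilpotent br"
    and "lorentzian g"
    and "\<forall>z\<in>lie_center br. z \<noteq> 0 \<longrightarrow> g z z > 0"
    and "orthonormal_basis g zb m (lie_center br)"
    and "orthonormal_basis g eb n (orth_compl g (lie_center br))"
    and "pH_type br g zb m eb n"
  shows "nilsoliton br g \<longleftrightarrow> m = 1 \<and> n = 2"
proof -
  have P: "pHs br g zb eb m n" using assms by (rule pHs.intro)
  interpret pHs br g zb eb m n by (rule P)
  obtain a0 where a0: "a0 < n" "s a0 = -1" using neg_exists by blast
  have seq: "s c = (if c = a0 then -1 else 1)" if c: "c < n" for c
  proof (cases "c = a0")
    case True
    then show ?thesis using a0(2) by simp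
  next
    case False
    have "s c \<noteq> -1"
    proof
      assume "s c = -1"
      then have "c = a0" by (rule neg_unique[OF c a0(1) _ a0(2)])
      then show False using False by simp
    qed
    then have "s c = 1" using s_pm[OF c] by blast
    then show ?thesis using False by simp
  qed
  have P0: "pHs0 br g zb eb m n a0"
    by (rule pHs0.intro[OF P]) (simp add: pHs0_axioms_def a0(1) seq)
  interpret pHs0 br g zb eb m n a0 by (rule P0)
  show ?thesis
  proof
    assume "nilsoliton br g"
    then obtain c D where "derivation br D" "\<forall>x. Ric x = c *\<^sub>R x + D x"
      unfolding nilsoliton_def by blast
    then have "Deq ((real n - 4) / 4 + c)" by (rule deriv_Deq)
    then show "m = 1 \<and> n = 2" by (rule nec)
  next
    assume "m = 1 \<and> n = 2"
    then show "nilsoliton br g" using suff by blast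
  qed
qed

end
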